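(* Let $p$ be a prime with $p\neq 3$, and let $C(x,y,z)=ax^3+by^3+cz^3$ with $a,b,c$ integers such that $p\nmid abc$. Then $R(C)$ is dense in $\mathbb{Q}_p$.
   Context: For an integral form $F$ in $r$ variables, $R(F)=\{F(\overline{x})/F(\overline{y}):\overline{x},\overline{y}\in\mathbb{Z}^r,\ F(\overline{y})\neq 0\}$, viewed as a subset of the field $\mathbb{Q}_p$ of $p$-adic numbers with its $p$-adic topology. *)

theory Defs
  imports "HOL-Computational_Algebra.Computational_Algebra"
begin

text \<open>p-adic valuation of a rational number x = a/b (a, b coprime, b > 0):
  v_p(x) = v_p(a) - v_p(b).  (Only used for x \<noteq> 0.)\<close>
definition padic_val_rat :: "nat \<Rightarrow> rat \<Rightarrow> int" where
  "padic_val_rat p x =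
     (case quotient_of x of (a, b) \<Rightarrow>
        int (multiplicity (int p) a) - int (multiplicity (int p) b))"

definition ratio_set :: "(int \<Rightarrow> int \<Rightarrow> int \<Rightarrow> int) \<Rightarrow> rat set" where
  "ratio_set F = {of_int (F x1 x2 x3) / of_int (F y1 y2 y3) | x1 x2 x3 y1 y2 y3.
                    F y1 y2 y3 \<noteq> 0}"

text \<open>A set of rationals is dense in Q_p.  Since Q is dense in Q_p and p-adic
  balls are open, this holds iff every p-adic ball centred at a rational q
  (radius p^(-n)) meets S, i.e. some r in S has r = q or v_p(r - q) \<ge> n.\<close>
definition padic_dense :: "nat \<Rightarrow> rat set \<Rightarrow> bool" where
  "padic_dense p S \<longleftrightarrow>
     (\<forall>q::rat. \<forall>n::int. \<exists>r\<in>S. r = q \<or> padic_val_rat p (r - q) \<ge> n)"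

end

theory Submission
  imports Defs "HOL-Number_Theory.Number_Theory"
begin


lemma inv_ex:
  fixes P c :: int
  assumes "prime P" "\<not> P dvd c"
  shows "\<exists>c'. P dvd c * c' - 1"
proof -
  have "coprime c P" using assms prime_imp_coprime_int[of P c] by (simp add: coprime_commute)
  then obtain x where "[c * x = 1] (mod P)" using cong_solve_coprime_int by blast
  then have "P dvd c * x - 1" by (simp add: cong_iff_dvd_diff)
  then show ?thesis by blast
qed

lemma dvd_comb:
  fixes P :: int
  assumes "P dvd H1" "P dvd H2" "E = c1 * H1 + c2 * H2"
  shows "P dvd E"
  using assms by auto

lemma dvd_comb3:
  fixes P :: int
  assumes "P dvd H1" "P dvd H2" "P dvd H3" "E = c1 * H1 + c2 * H2 + c3 * H3"
  shows "P dvd E"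
  using assms by auto

definition cube :: "int \<Rightarrow> int \<Rightarrow> bool" where
  "cube P u \<longleftrightarrow> \<not> P dvd u \<and> (\<exists>x. P dvd x^3 - u)"

lemma cube_cong: assumes "cube P u" "P dvd u - v" shows "cube P v"
proof -
  from assms obtain x where x: "P dvd x^3 - u" "\<not> P dvd u" unfolding cube_def by auto
  have "P dvd x^3 - v" using dvd_comb[OF x(1) assms(2), of _ 1 1] by auto
  moreover have "\<not> P dvd v"
  proof
    assume "P dvd v" then have "P dvd (u - v) + v" using assms(2) by (intro dvd_add)
    then show False using x(2) by simp
  qed
  ultimately show ?thesis unfolding cube_def by auto
qed

lemma cube_mult: assumes "prime P" "cube P u" "cube P v" shows "cube P (u*v)"
proof -
  from assms obtain x y where x: "P dvd x^3 - u" "\<not> P dvd u" "P dvd y^3 - v" "\<not> P dvd v"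
    unfolding cube_def by auto
  have "P dvd (x*y)^3 - u*v" by (rule dvd_comb[OF x(1) x(3), of _ "y^3" u]) (simp add: algebra_simps power_mult_distrib)
  moreover have "\<not> P dvd u * v" using x assms(1) prime_dvd_mult_int by blast
  ultimately show ?thesis unfolding cube_def by auto
qed

lemma cube_div: assumes "prime P" "cube P u" "cube P (u*v)" shows "cube P v"
proof -
  from assms obtain x y where x: "P dvd x^3 - u" "\<not> P dvd u" "P dvd y^3 - u*v" "\<not> P dvd u*v"
    unfolding cube_def by auto
  have "\<not> P dvd x"
  proof
    assume "P dvd x" then have "P dvd x^3" by (metis dvd_mult2 power3_eq_cube)
    then have "P dvd x^3 - (x^3 - u)" using x(1) by (rule dvd_diff)
    then show False using x(2) by simp
  qed
  then obtain x' where x': "P dvd x * x' - 1" using inv_ex assms(1) by blast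
  have "P dvd (y*x')^3 - v"
    by (rule dvd_comb3[OF x(3) x(1) x', of _ "x'^3" "- v * x'^3" "v * (x^2*x'^2 + x*x' + 1)"])
       (simp add: algebra_simps power3_eq_cube power2_eq_square)
  moreover have "\<not> P dvd v" using x(4) by auto
  ultimately show ?thesis unfolding cube_def by auto
qed

lemma cube_pow3: assumes "prime P" "\<not> P dvd x" shows "cube P (x^3)"
  using assms prime_dvd_power_int[of P x 3] unfolding cube_def by (auto intro!: exI[of _ x])

lemma cube_neg1: assumes "prime P" shows "cube P (-1)"
  using assms unfolding cube_def by (auto intro!: exI[of _ "-1"] simp: prime_int_iff)

lemma cube_neg: assumes "prime P" "cube P u" shows "cube P (-u)"
  using cube_mult[OF assms(1) cube_neg1[OF assms(1)] assms(2)] by simp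

lemma cube_unit: "cube P u \<Longrightarrow> \<not> P dvd u" unfolding cube_def by auto

lemma gen_ex:
  fixes P :: int
  assumes "prime P"
  shows "\<exists>g. \<forall>u. \<not> P dvd u \<longrightarrow> (\<exists>i. P dvd g^i - u)"
proof -
  define p where "p = nat P"
  have P: "P = int p" using prime_gt_0_int[OF assms] p_def by auto
  have pp: "prime p" using assms P prime_nat_int_transfer by simp
  then have p1: "p > 1" using prime_gt_1_nat by auto
  obtain g where g: "residue_primroot p g" using prime_primitive_root_exists[OF p1 pp] by blast
  have bij: "bij_betw (\<lambda>i. g ^ i mod p) {..<totient p} (totatives p)"
    using residue_primroot_is_generator[OF p1 g] .
  show ?thesis
  proof (intro exI[of _ "int g"] allI impI)
    fix u :: int assume u: "\<not> P dvd u"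
    define x where "x = nat (u mod P)"
    have x0: "int x = u mod P" unfolding x_def using P p1 by simp
    have "\<not> p dvd x"
    proof
      assume "p dvd x" then have "P dvd int x" using P by simp
      then have "P dvd u mod P" using x0 by simp
      then show False using u by (simp add: dvd_mod_iff)
    qed
    moreover have "x > 0" using \<open>\<not> p dvd x\<close> by (cases x) auto
    moreover have "x \<le> p"
    proof -
      have "u mod P < P" using P p1 by simp
      then have "int x < int p" using x0 P by simp
      then show ?thesis by simp
    qed
    ultimately have "x \<in> totatives p"
      using prime_imp_coprime[OF pp, of x] by (auto simp: totatives_def ac_simps)
    then have "x \<in> (\<lambda>i. g ^ i mod p) ` {..<totient p}" using bij by (simp add: bij_betw_def)
    then obtain i where i: "x = g ^ i mod p" by blast
    have "int (g ^ i mod p) = int (g^i) mod P" unfolding P by (rule of_nat_mod)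
    then have "int (g^i) mod P = u mod P" using x0 i by simp
    then have "P dvd int g ^ i - u" by (simp add: mod_eq_dvd_iff)
    then show "\<exists>i. P dvd int g ^ i - u" by blast
  qed
qed

lemma trich:
  fixes P \<beta> u :: int
  assumes "prime P" "\<not> cube P \<beta>" "\<not> P dvd \<beta>" "\<not> P dvd u"
  shows "cube P u \<or> cube P (\<beta>*u) \<or> cube P (\<beta>^2*u)"
proof -
  obtain g where g: "\<forall>u. \<not> P dvd u \<longrightarrow> (\<exists>i. P dvd g^i - u)" using gen_ex[OF assms(1)] by blast
  obtain m where m: "P dvd g^m - \<beta>" using g assms(3) by blast
  obtain k where k: "P dvd g^k - u" using g assms(4) by blast
  have "\<not> 3 dvd m"
  proof
    assume "3 dvd m" then obtain l where "m = 3*l" by blast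
    then have "g^m = (g^l)^3" by (simp add: power_mult[symmetric] mult.commute)
    then have "cube P \<beta>" using m assms(3) unfolding cube_def by auto
    then show False using assms(2) by simp
  qed
  then have "3 dvd k \<or> 3 dvd k + m \<or> 3 dvd k + 2*m" by presburger
  moreover {
    assume "3 dvd k" then obtain l where "k = 3*l" by blast
    then have "g^k = (g^l)^3" by (simp add: power_mult[symmetric] mult.commute)
    then have "cube P u" using k assms(4) unfolding cube_def by auto
  }
  moreover {
    assume "3 dvd k + m" then obtain l where l: "k + m = 3*l" by blast
    then have e: "(g^l)^3 = g^k * g^m" by (metis power_add power_mult mult.commute)
    have "P dvd (g^l)^3 - \<beta> * u"
      by (rule dvd_comb[OF m k, of _ "g^k" \<beta>]) (simp add: e algebra_simps)
    moreover have "\<not> P dvd \<beta> * u" using assms prime_dvd_mult_int by blast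
    ultimately have "cube P (\<beta>*u)" unfolding cube_def by blast
  }
  moreover {
    assume "3 dvd k + 2*m" then obtain l where l: "k + 2*m = 3*l" by blast
    then have e: "(g^l)^3 = g^k * g^m * g^m" by (metis power_add power_mult mult.commute mult_2 add.assoc)
    have "P dvd (g^l)^3 - \<beta>^2 * u"
      by (rule dvd_comb3[OF m m k, of _ "g^k*g^m" "\<beta>*g^k" "\<beta>^2"]) (simp add: e algebra_simps power2_eq_square)
    moreover have "\<not> P dvd \<beta>^2 * u" using assms prime_dvd_mult_int prime_dvd_power_int by blast
    ultimately have "cube P (\<beta>^2*u)" unfolding cube_def by blast
  }
  ultimately show ?thesis by blast
qed

lemma mod_dvd_int: "(P::int) dvd (E mod P) - E"
proof -
  have "E mod P - E = - (P * (E div P))" by (metis minus_diff_eq minus_mod_eq_mult_div)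
  then show ?thesis by simp
qed

lemma unit_mult: "prime (P::int) \<Longrightarrow> \<not> P dvd x \<Longrightarrow> \<not> P dvd y \<Longrightarrow> \<not> P dvd x * y"
  using prime_dvd_mult_int by blast

lemma cube_unit_factor: "cube P (x * y) \<Longrightarrow> \<not> P dvd y"
  unfolding cube_def by auto

lemma eq_of_dvd_range:
  fixes P x y :: int
  assumes "P dvd x - y" "x \<in> {0..<P}" "y \<in> {0..<P}"
  shows "x = y"
proof -
  have "x mod P = y mod P" using assms(1) by (simp add: mod_eq_dvd_iff)
  then show ?thesis using assms(2,3) by simp
qed

lemma croot:
  fixes P u :: int
  assumes "prime P" "cube P u"
  shows "\<exists>y. P dvd 1 + u * y^3"
proof -
  obtain t where t: "P dvd t^3 - u" using assms(2) unfolding cube_def by auto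
  have "\<not> P dvd t"
  proof
    assume "P dvd t" then have "P dvd t^3" by (metis dvd_mult2 power3_eq_cube)
    then have "P dvd t^3 - (t^3 - u)" using t by (rule dvd_diff)
    then show False using assms(2) unfolding cube_def by simp
  qed
  then obtain t' where t': "P dvd t * t' - 1" using inv_ex assms(1) by blast
  have "P dvd 1 + u * (-t')^3"
    by (rule dvd_comb[OF t t', of _ "t'^3" "- ((t*t')^2 + t*t' + 1)"])
       (simp add: algebra_simps power3_eq_cube power2_eq_square)
  then show ?thesis by blast
qed




lemma mod_dvd_int2:
  fixes P E F :: int
  assumes "E = - F"
  shows "P dvd (E mod P) + F"
proof -
  have "(E mod P) + F = E mod P - E" using assms by simp
  then show ?thesis using mod_dvd_int[of P E] by simp
qed

lemma core_main:
  fixes P \<beta> :: int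
  assumes pr: "prime P" and bu: "\<not> P dvd \<beta>" and bn: "\<not> cube P \<beta>"
  shows "\<exists>v. cube P (\<beta>^2*v) \<and> cube P (\<beta>*(1+v))"
proof (rule ccontr)
  assume H: "\<not> (\<exists>v. cube P (\<beta>^2*v) \<and> cube P (\<beta>*(1+v)))"
  have P2: "P \<ge> 2" using pr prime_ge_2_int by blast
  define K0 where "K0 = {w\<in>{0..<P}. cube P w}"
  define K1 where "K1 = {v\<in>{0..<P}. cube P (\<beta>^2*v)}"
  have fin0: "finite K0" unfolding K0_def by (rule finite_subset[where B="{0..<P}"]) auto
  have fin1: "finite K1" unfolding K1_def by (rule finite_subset[where B="{0..<P}"]) auto
  have cb3: "cube P (\<beta>^3)" using cube_pow3[OF pr bu] .
  have c01: "card K0 \<le> card K1"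
  proof (rule card_inj_on_le[of "\<lambda>w. (\<beta>*w) mod P"])
    show "inj_on (\<lambda>w. (\<beta>*w) mod P) K0"
    proof (rule inj_onI)
      fix w1 w2 assume w: "w1 \<in> K0" "w2 \<in> K0" "(\<beta>*w1) mod P = (\<beta>*w2) mod P"
      then have "P dvd \<beta> * (w1 - w2)" by (simp add: mod_eq_dvd_iff algebra_simps)
      then have "P dvd w1 - w2" using bu pr prime_dvd_mult_int by blast
      then show "w1 = w2" using eq_of_dvd_range w(1,2) unfolding K0_def by blast
    qed
    show "(\<lambda>w. (\<beta>*w) mod P) ` K0 \<subseteq> K1"
    proof
      fix x assume "x \<in> (\<lambda>w. (\<beta>*w) mod P) ` K0"
      then obtain w where w: "w \<in> K0" "x = (\<beta>*w) mod P" by blast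
      have "cube P (\<beta>^3 * w)" using cube_mult[OF pr cb3] w(1) unfolding K0_def by blast
      moreover have "P dvd \<beta>^3 * w - \<beta>^2 * x"
        by (rule dvd_comb[OF mod_dvd_int[of P "\<beta>*w"] mod_dvd_int[of P "\<beta>*w"], of _ "-(\<beta>^2)" 0])
           (simp add: w(2) algebra_simps power3_eq_cube power2_eq_square)
      ultimately have "cube P (\<beta>^2 * x)" by (rule cube_cong)
      moreover have "x \<in> {0..<P}" using w(2) P2 by simp
      ultimately show "x \<in> K1" unfolding K1_def by blast
    qed
    show "finite K1" by (rule fin1)
  qed
  define iv where "iv v = (SOME v'. P dvd v * v' - 1)" for v
  define h where "h v = (if cube P (1+v) then (-(1+v)) mod P else (-(1+v) * iv v) mod P)" for v
  have E12: "False" if "cube P (\<beta>^2*(1+w))" "cube P (\<beta>*(1+w))" for w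
  proof -
    have "cube P (\<beta>*(1+w)*\<beta>)" using that(1) by (simp add: algebra_simps power2_eq_square)
    then have "cube P \<beta>" using cube_div[OF pr that(2)] by blast
    then show False using bn by simp
  qed
  have K1u: "\<not> P dvd v" if "v \<in> K1" for v
    using that unfolding K1_def by (auto dest: cube_unit_factor)
  have K1iv: "P dvd v * iv v - 1" if vK: "v \<in> K1" for v
  proof -
    obtain v' where "P dvd v * v' - 1" using inv_ex[OF pr K1u[OF vK]] by blast
    then show ?thesis unfolding iv_def by (rule someI)
  qed
  have K1B: "cube P (\<beta>^2*(1+v))" if "v \<in> K1" "\<not> cube P (1+v)" for v
  proof -
    have c: "cube P (\<beta>^2*v)" using that unfolding K1_def by blast
    have "\<not> P dvd 1 + v"
    proof
      assume d: "P dvd 1 + v"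
      have "cube P (-(\<beta>^2*v))" using cube_neg[OF pr c] .
      moreover have "P dvd -(\<beta>^2*v) - \<beta>^2"
        by (rule dvd_comb[OF d d, of _ "-(\<beta>^2)" 0]) (simp add: algebra_simps)
      ultimately have "cube P (\<beta>^2)" by (rule cube_cong)
      moreover have "cube P (\<beta>^2 * \<beta>)" using cb3 by (simp add: power2_eq_square power3_eq_cube)
      ultimately have "cube P \<beta>" using cube_div[OF pr] by blast
      then show False using bn by simp
    qed
    then have "cube P (1+v) \<or> cube P (\<beta>*(1+v)) \<or> cube P (\<beta>^2*(1+v))"
      using trich[OF pr bn bu] by blast
    moreover have "\<not> cube P (\<beta>*(1+v))" using H c by blast
    ultimately show ?thesis using that(2) by blast
  qed
  have hK: "h v \<in> K0 - {P - 1} \<and>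
     (if cube P (1+v) then cube P (\<beta>^2*(1 + h v)) else cube P (\<beta>*(1 + h v)))"
    if v: "v \<in> K1" for v
  proof (cases "cube P (1+v)")
    case True
    define w where "w = (-(1+v)) mod P"
    have hw: "h v = w" using True unfolding h_def w_def by simp
    have dw: "P dvd w - (-(1+v))" unfolding w_def by (rule mod_dvd_int)
    have "P dvd -(1+v) - w" by (rule dvd_comb[OF dw dw, of _ "-1" 0]) simp
    then have "cube P w" using cube_cong[OF cube_neg[OF pr True]] by blast
    moreover have "w \<noteq> P - 1"
    proof
      assume "w = P - 1"
      then have "P dvd (P - 1) - (-(1+v))" using dw by simp
      then have "P dvd P - v" by (simp add: algebra_simps)
      then have "P dvd P - (P - v)" by (rule dvd_diff[OF dvd_refl])
      then show False using K1u[OF v] by simp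
    qed
    moreover have "w \<in> {0..<P}" unfolding w_def using P2 by simp
    moreover have "cube P (\<beta>^2*(1 + w))"
    proof -
      have c: "cube P (-(\<beta>^2*v))" using cube_neg[OF pr] v unfolding K1_def by blast
      have "P dvd -(\<beta>^2*v) - \<beta>^2*(1 + w)"
        by (rule dvd_comb[OF dw dw, of _ "-(\<beta>^2)" 0]) (simp add: algebra_simps)
      then show ?thesis using cube_cong[OF c] by blast
    qed
    ultimately show ?thesis using True hw unfolding K0_def by simp
  next
    case False
    define v' where "v' = iv v"
    have vv: "P dvd v * v' - 1" using K1iv[OF v] unfolding v'_def .
    define w where "w = (-(1+v)*v') mod P"
    have hw: "h v = w" using False unfolding h_def w_def v'_def by simp
    have dw: "P dvd w - (-(1+v)*v')" unfolding w_def by (rule mod_dvd_int)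
    have d1: "P dvd (1 + w) + v'"
      by (rule dvd_comb[OF dw vv, of _ 1 "-1"]) (simp add: algebra_simps)
    have cv: "cube P (\<beta>^2*v)" using v unfolding K1_def by blast
    have cB: "cube P (\<beta>^2*(1+v))" using K1B[OF v False] .
    have "cube P (\<beta>^2*v * ((1+v)*v'))"
    proof -
      have "P dvd \<beta>^2*(1+v) - \<beta>^2*v * ((1+v)*v')"
        by (rule dvd_comb[OF vv vv, of _ "-(\<beta>^2)*(1+v)" 0]) (simp add: algebra_simps)
      then show ?thesis using cube_cong[OF cB] by blast
    qed
    then have "cube P ((1+v)*v')" using cube_div[OF pr cv] by blast
    then have "cube P (-((1+v)*v'))" using cube_neg[OF pr] by blast
    moreover have "P dvd -((1+v)*v') - w" by (rule dvd_comb[OF dw dw, of _ "-1" 0]) (simp add: algebra_simps)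
    ultimately have "cube P w" by (rule cube_cong)
    moreover have "w \<noteq> P - 1"
    proof
      assume "w = P - 1"
      then have "P dvd P + v'" using d1 by simp
      then have "P dvd (P + v') - P" by (rule dvd_diff) simp
      then have "P dvd v * v'" by simp
      then have "P dvd v * v' - (v * v' - 1)" using vv by (rule dvd_diff)
      then show False using pr by (simp add: prime_int_iff)
    qed
    moreover have "w \<in> {0..<P}" unfolding w_def using P2 by simp
    moreover have "cube P (\<beta>*(1 + w))"
    proof -
      have "P dvd \<beta>^3 - \<beta>^2*v * (\<beta>*v')"
        by (rule dvd_comb[OF vv vv, of _ "-(\<beta>^3)" 0]) (simp add: algebra_simps power3_eq_cube power2_eq_square)
      then have "cube P (\<beta>^2*v * (\<beta>*v'))" using cube_cong[OF cb3] by blast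
      then have "cube P (\<beta>*v')" using cube_div[OF pr cv] by blast
      then have c: "cube P (-(\<beta>*v'))" using cube_neg[OF pr] by blast
      have "P dvd -(\<beta>*v') - \<beta>*(1 + w)"
        by (rule dvd_comb[OF d1 d1, of _ "-\<beta>" 0]) (simp add: algebra_simps)
      then show ?thesis using cube_cong[OF c] by blast
    qed
    ultimately show ?thesis using False hw unfolding K0_def by simp
  qed
  have "card K1 \<le> card (K0 - {P - 1})"
  proof (rule card_inj_on_le[of h])
    show "h ` K1 \<subseteq> K0 - {P - 1}"
    proof (rule image_subsetI)
      fix v assume "v \<in> K1" show "h v \<in> K0 - {P - 1}" using hK[OF \<open>v \<in> K1\<close>] by (rule conjunct1)
    qed
    show "finite (K0 - {P - 1})" using fin0 by simp
    show "inj_on h K1"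
    proof (rule inj_onI)
      fix v1 v2 assume v: "v1 \<in> K1" "v2 \<in> K1" and e: "h v1 = h v2"
      have r1: "v1 \<in> {0..<P}" "v2 \<in> {0..<P}" using v unfolding K1_def by auto
      have hA: "P dvd h v + (1 + v)" if "cube P (1+v)" for v
      proof -
        have hv: "h v = (-(1+v)) mod P" using that unfolding h_def by simp
        show ?thesis unfolding hv by (rule mod_dvd_int2) simp
      qed
      have hB: "P dvd h v + (1 + v) * iv v" if "\<not> cube P (1+v)" for v
      proof -
        have hv: "h v = (-(1+v) * iv v) mod P" using that unfolding h_def by simp
        show ?thesis unfolding hv by (rule mod_dvd_int2) (simp add: algebra_simps)
      qed
      have C1: "cube P (\<beta>^2*(1 + h v))" if "v \<in> K1" "cube P (1+v)" for v
        using hK[OF that(1)] that(2) by simp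
      have C2: "cube P (\<beta>*(1 + h v))" if "v \<in> K1" "\<not> cube P (1+v)" for v
        using hK[OF that(1)] that(2) by simp
      show "v1 = v2"
      proof (cases "cube P (1+v1)")
        case T1: True
        show ?thesis
        proof (cases "cube P (1+v2)")
          case True
          have "P dvd v1 - v2"
            by (rule dvd_comb[OF hA[OF T1] hA[OF True], of _ 1 "-1"]) (simp add: e algebra_simps)
          then show ?thesis using eq_of_dvd_range r1 by blast
        next
          case False
          have "cube P (\<beta>^2*(1 + h v1))" "cube P (\<beta>*(1 + h v1))"
            using C1[OF v(1) T1] C2[OF v(2) False] e by simp_all
          then show ?thesis using E12 by blast
        qed
      next
        case F1: False
        show ?thesis
        proof (cases "cube P (1+v2)")
          case True
          have "cube P (\<beta>^2*(1 + h v1))" "cube P (\<beta>*(1 + h v1))"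
            using C1[OF v(2) True] C2[OF v(1) F1] e by simp_all
          then show ?thesis using E12 by blast
        next
          case False
          have i1: "P dvd v1 * iv v1 - 1" and i2: "P dvd v2 * iv v2 - 1" using K1iv v by auto
          have a1: "P dvd h v1 + (1 + v1) * iv v1" using hB[OF F1] .
          have a2: "P dvd h v2 + (1 + v2) * iv v2" using hB[OF False] .
          have d0: "P dvd (v1 * iv v1 - 1) - (v2 * iv v2 - 1)" using i1 i2 by (rule dvd_diff)
          have d: "P dvd iv v1 - iv v2"
            by (rule dvd_comb3[OF a1 a2 d0, of _ 1 "-1" "-1"]) (simp add: e algebra_simps)
          have "P dvd v1 - v2"
            by (rule dvd_comb3[OF d i2 i1, of _ "-v1*v2" "-v1" v2]) (simp add: algebra_simps)
          then show ?thesis using eq_of_dvd_range r1 by blast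
        qed
      qed
    qed
  qed
  moreover have "P - 1 \<in> K0"
  proof -
    have "P dvd (-1) - (P - 1)" by simp
    then have "cube P (P - 1)" using cube_cong[OF cube_neg1[OF pr]] by blast
    then show ?thesis unfolding K0_def using P2 by simp
  qed
  ultimately have "card K1 < card K0" using card_Diff1_less[OF fin0, of "P - 1"] by linarith
  then show False using c01 by simp
qed




lemma root_unit: fixes P t u :: int
  assumes "P dvd t^3 - u" "\<not> P dvd u" shows "\<not> P dvd t"
proof
  assume "P dvd t" then have "P dvd t^3" by (metis dvd_mult2 power3_eq_cube)
  then have "P dvd t^3 - (t^3 - u)" using assms(1) by (rule dvd_diff)
  then show False using assms(2) by simp
qed

lemma core_sol:
  fixes P \<beta> \<gamma> :: int
  assumes pr: "prime P" and bu: "\<not> P dvd \<beta>" and gu: "\<not> P dvd \<gamma>"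
    and bn: "\<not> cube P \<beta>" and gn: "\<not> cube P \<gamma>" and bgn: "\<not> cube P (\<beta>^2*\<gamma>)"
    and main: "cube P (\<beta>^2*v)" "cube P (\<beta>*(1+v))"
  shows "\<exists>y z. P dvd 1 + \<beta>*y^3 + \<gamma>*z^3"
proof -
  have "cube P \<gamma> \<or> cube P (\<beta>*\<gamma>) \<or> cube P (\<beta>^2*\<gamma>)" using trich[OF pr bn bu gu] .
  then have cbg: "cube P (\<beta>*\<gamma>)" using gn bgn by blast
  obtain t where t: "P dvd t^3 - \<beta>^2*v" using main(1) unfolding cube_def by auto
  obtain s where s: "P dvd s^3 - \<beta>*(1+v)" using main(2) unfolding cube_def by auto
  obtain r where r: "P dvd r^3 - \<beta>*\<gamma>" using cbg unfolding cube_def by auto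
  have ru: "\<not> P dvd r" using root_unit[OF r] cbg unfolding cube_def by blast
  obtain b' where b': "P dvd \<beta> * b' - 1" using inv_ex[OF pr bu] by blast
  obtain r' where r': "P dvd r * r' - 1" using inv_ex[OF pr ru] by blast
  have i: "P dvd \<beta> * (t*b')^3 - v"
    by (rule dvd_comb[OF t b', of _ "\<beta>*b'^3" "v*((\<beta>*b')^2 + \<beta>*b' + 1)"])
       (simp add: algebra_simps power3_eq_cube power2_eq_square)
  have "P dvd \<beta> * (\<gamma> * (-s*r')^3 + (1+v))"
    by (rule dvd_comb3[OF r r' s, of _ "s^3*r'^3" "-(s^3)*((r*r')^2 + r*r' + 1)" "-1"])
       (simp add: algebra_simps power3_eq_cube power2_eq_square)
  then have ii: "P dvd \<gamma> * (-s*r')^3 + (1+v)" using bu pr prime_dvd_mult_int by blast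
  have "P dvd 1 + \<beta> * (t*b')^3 + \<gamma> * (-s*r')^3"
    by (rule dvd_comb[OF i ii, of _ 1 1]) simp
  then show ?thesis by blast
qed

lemma nz:
  fixes P a b c :: int
  assumes pr: "prime P" and au: "\<not> P dvd a" and bu: "\<not> P dvd b" and cu: "\<not> P dvd c"
  shows "\<exists>x y z. \<not> (P dvd x \<and> P dvd y \<and> P dvd z) \<and> P dvd a*x^3 + b*y^3 + c*z^3"
proof -
  have P1: "\<not> P dvd 1" using pr by (simp add: prime_int_iff)
  obtain a' where a': "P dvd a * a' - 1" using inv_ex[OF pr au] by blast
  define \<beta> where "\<beta> = b * a'"
  define \<gamma> where "\<gamma> = c * a'"
  have a'u: "\<not> P dvd a'"
  proof
    assume "P dvd a'" then have "P dvd a * a'" by simp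
    then have "P dvd a * a' - (a * a' - 1)" using a' by (rule dvd_diff)
    then show False using P1 by simp
  qed
  have bu': "\<not> P dvd \<beta>" unfolding \<beta>_def using unit_mult[OF pr bu a'u] .
  have gu': "\<not> P dvd \<gamma>" unfolding \<gamma>_def using unit_mult[OF pr cu a'u] .
  have lift: "P dvd a*x^3 + b*y^3 + c*z^3" if "P dvd x^3 + \<beta>*y^3 + \<gamma>*z^3" for x y z
    by (rule dvd_comb[OF that a', of _ a "-(b*y^3 + c*z^3)"]) (simp add: \<beta>_def \<gamma>_def algebra_simps)
  show ?thesis
  proof (cases "cube P \<beta>")
    case True
    then obtain y where "P dvd 1 + \<beta>*y^3" using croot[OF pr] by blast
    then have "P dvd 1^3 + \<beta>*y^3 + \<gamma>*0^3" by simp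
    then show ?thesis using lift P1 by blast
  next
    case bn: False
    show ?thesis
    proof (cases "cube P \<gamma>")
      case True
      then obtain z where "P dvd 1 + \<gamma>*z^3" using croot[OF pr] by blast
      then have "P dvd 1^3 + \<beta>*0^3 + \<gamma>*z^3" by simp
      then show ?thesis using lift P1 by blast
    next
      case gn: False
      show ?thesis
      proof (cases "cube P (\<beta>^2*\<gamma>)")
        case True
        then obtain y0 where y0: "P dvd 1 + \<beta>^2*\<gamma>*y0^3" using croot[OF pr] by blast
        have "P dvd 0^3 + \<beta>*1^3 + \<gamma>*(\<beta>*y0)^3"
          by (rule dvd_comb[OF y0 y0, of _ \<beta> 0]) (simp add: algebra_simps power3_eq_cube power2_eq_square)
        then show ?thesis using lift P1 by blast
      next
        case False
        obtain v where "cube P (\<beta>^2*v)" "cube P (\<beta>*(1+v))" using core_main[OF pr bu' bn] by blast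
        then obtain y z where "P dvd 1 + \<beta>*y^3 + \<gamma>*z^3"
          using core_sol[OF pr bu' gu' bn gn False] by blast
        then have "P dvd 1^3 + \<beta>*y^3 + \<gamma>*z^3" by simp
        then show ?thesis using lift P1 by blast
      qed
    qed
  qed
qed




lemma hstep:
  fixes P A B x h e :: int and N :: nat
  assumes pr: "prime P" and u: "\<not> P dvd 3*A*x^2" and N: "N \<ge> 1" and eq: "A*x^3 + B = P^N * h"
  shows "\<exists>t e1. A*(x + P^N*t)^3 + B = P^N * e1 \<and> P dvd e1 - e"
proof -
  obtain c' where c': "P dvd 3*A*x^2*c' - 1" using inv_ex[OF pr u] by blast
  define Q where "Q = P^N"
  have PQ: "P dvd Q" unfolding Q_def using N by (simp add: dvd_power)
  define t where "t = c' * (e - h)"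
  define e1 where "e1 = h + 3*A*x^2*t + Q*(3*A*x*t^2 + Q*A*t^3)"
  have "A*(x + Q*t)^3 + B = Q * e1"
  proof -
    have "A*(x + Q*t)^3 + B = (A*x^3 + B) + Q*(3*A*x^2*t + Q*(3*A*x*t^2 + Q*A*t^3))"
      by (simp add: algebra_simps power3_eq_cube power2_eq_square)
    also have "\<dots> = Q * e1" unfolding e1_def using eq Q_def by (simp add: algebra_simps)
    finally show ?thesis .
  qed
  moreover have "P dvd e1 - e"
    by (rule dvd_comb[OF c' PQ, of _ "e - h" "3*A*x*t^2 + Q*A*t^3"]) (simp add: e1_def t_def algebra_simps)
  ultimately show ?thesis unfolding Q_def by blast
qed

lemma unit3:
  fixes P A x :: int
  assumes "prime P" "P \<noteq> 3" "\<not> P dvd A" "\<not> P dvd x"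
  shows "\<not> P dvd 3*A*x^2"
proof -
  have "\<not> P dvd 3"
  proof
    assume "P dvd 3"
    then have "P = 3" using primes_dvd_imp_eq[OF assms(1), of 3] by simp
    then show False using assms(2) by simp
  qed
  moreover have "\<not> P dvd x^2" using assms(1,4) prime_dvd_power_int by blast
  ultimately show ?thesis using assms(1,3) prime_dvd_mult_int by blast
qed

lemma hensel:
  fixes P A B x0 :: int
  assumes pr: "prime P" and P3: "P \<noteq> 3" and Au: "\<not> P dvd A" and xu: "\<not> P dvd x0"
    and z: "P dvd A*x0^3 + B"
  shows "\<exists>x. P dvd x - x0 \<and> P^(Suc n) dvd A*x^3 + B"
proof (induction n)
  case 0
  then show ?case using z by (intro exI[of _ x0]) simp
next
  case (Suc n)
  then obtain x where x: "P dvd x - x0" "P^(Suc n) dvd A*x^3 + B" by blast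
  have xu': "\<not> P dvd x"
  proof
    assume "P dvd x" then have "P dvd x - (x - x0)" using x(1) by (rule dvd_diff)
    then show False using xu by simp
  qed
  obtain h where h: "A*x^3 + B = P^(Suc n) * h" using x(2) by (auto simp: dvd_def)
  obtain t e1 where te: "A*(x + P^(Suc n)*t)^3 + B = P^(Suc n) * e1" "P dvd e1 - 0"
    using hstep[OF pr unit3[OF pr P3 Au xu'] _ h, of 0] by auto
  have "P^(Suc (Suc n)) dvd A*(x + P^(Suc n)*t)^3 + B"
    using te by (auto simp: dvd_def)
  moreover have "P dvd (x + P^(Suc n)*t) - x0"
    by (rule dvd_comb[OF x(1) dvd_refl[of P], of _ 1 "P^n*t"]) (simp add: algebra_simps)
  ultimately show ?case by blast
qed


lemma hensel_exact:
  fixes P A B x0 e :: int and j :: nat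
  assumes pr: "prime P" and P3: "P \<noteq> 3" and Au: "\<not> P dvd A" and xu: "\<not> P dvd x0"
    and z: "P dvd A*x0^3 + B" and j: "j \<ge> 1"
  shows "\<exists>x e1. A*x^3 + B = P^j * e1 \<and> P dvd e1 - e"
proof -
  obtain n where n: "j = Suc n" using j by (cases j) auto
  obtain x where x: "P dvd x - x0" "P^j dvd A*x^3 + B" using hensel[OF pr P3 Au xu z, of n] n by blast
  have xu': "\<not> P dvd x"
  proof
    assume "P dvd x" then have "P dvd x - (x - x0)" using x(1) by (rule dvd_diff)
    then show False using xu by simp
  qed
  obtain h where h: "A*x^3 + B = P^j * h" using x(2) by (auto simp: dvd_def)
  show ?thesis using hstep[OF pr unit3[OF pr P3 Au xu'] j h, of e] by blast
qed

lemma values_ex: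
  fixes P a b c e :: int and j :: nat
  assumes pr: "prime P" and P3: "P \<noteq> 3" and au: "\<not> P dvd a" and bu: "\<not> P dvd b" and cu: "\<not> P dvd c"
    and j: "j \<ge> 1"
  shows "\<exists>x y z e1. a*x^3 + b*y^3 + c*z^3 = P^j * e1 \<and> P dvd e1 - e"
proof -
  obtain x0 y0 z0 where nt: "\<not> (P dvd x0 \<and> P dvd y0 \<and> P dvd z0)"
    and d: "P dvd a*x0^3 + b*y0^3 + c*z0^3" using nz[OF pr au bu cu] by blast
  consider "\<not> P dvd x0" | "\<not> P dvd y0" | "\<not> P dvd z0" using nt by blast
  then show ?thesis
  proof cases
    case 1
    have "P dvd a*x0^3 + (b*y0^3 + c*z0^3)" using d by (simp add: add.assoc)
    from hensel_exact[OF pr P3 au 1 this j, of e] obtain x e1 where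
      "a*x^3 + (b*y0^3 + c*z0^3) = P^j * e1" "P dvd e1 - e" by blast
    then show ?thesis by (intro exI[of _ x] exI[of _ y0] exI[of _ z0] exI[of _ e1]) (simp add: add.assoc)
  next
    case 2
    have "P dvd b*y0^3 + (a*x0^3 + c*z0^3)" using d by (simp add: algebra_simps)
    from hensel_exact[OF pr P3 bu 2 this j, of e] obtain y e1 where
      "b*y^3 + (a*x0^3 + c*z0^3) = P^j * e1" "P dvd e1 - e" by blast
    then show ?thesis by (intro exI[of _ x0] exI[of _ y] exI[of _ z0] exI[of _ e1]) (simp add: algebra_simps)
  next
    case 3
    have "P dvd c*z0^3 + (a*x0^3 + b*y0^3)" using d by (simp add: algebra_simps)
    from hensel_exact[OF pr P3 cu 3 this j, of e] obtain z e1 where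
      "c*z^3 + (a*x0^3 + b*y0^3) = P^j * e1" "P dvd e1 - e" by blast
    then show ?thesis by (intro exI[of _ x0] exI[of _ y0] exI[of _ z] exI[of _ e1]) (simp add: algebra_simps)
  qed
qed


lemma pval:
  fixes p :: nat and A B :: int
  assumes pp: "prime p" and A: "A \<noteq> 0" and B: "B \<noteq> 0"
  shows "padic_val_rat p (of_int A / of_int B) =
           int (multiplicity (int p) A) - int (multiplicity (int p) B)"
proof -
  obtain n d where q: "quotient_of (of_int A / of_int B) = (n, d)" by (cases "quotient_of (of_int A / of_int B)") auto
  have d0: "d > 0" using quotient_of_denom_pos[OF q] .
  have e: "(of_int A / of_int B :: rat) = of_int n / of_int d" using quotient_of_div[OF q] .
  have "(of_int (A * d) :: rat) = of_int (n * B)" using e B d0 by (simp add: field_simps)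
  then have e2: "A * d = n * B" by (simp only: of_int_eq_iff)
  have n0: "n \<noteq> 0" using e2 A d0 by auto
  have pe: "prime_elem (int p)" using pp by simp
  have "multiplicity (int p) (A*d) = multiplicity (int p) (n*B)" using e2 by simp
  then have "multiplicity (int p) A + multiplicity (int p) d = multiplicity (int p) n + multiplicity (int p) B"
    using prime_elem_multiplicity_mult_distrib[OF pe] A B n0 d0 by simp
  then show ?thesis unfolding padic_val_rat_def q by simp
qed

lemma mem_ratio: "F y1 y2 y3 \<noteq> 0 \<Longrightarrow> of_int (F x1 x2 x3) / of_int (F y1 y2 y3) \<in> ratio_set F"
  unfolding ratio_set_def by blast


theorem theorem1p5:
  fixes p :: nat and a b c :: int
  assumes "prime p" and "p \<noteq> 3" and "\<not> int p dvd a * b * c"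
  shows "padic_dense p (ratio_set (\<lambda>x y z. a * x ^ 3 + b * y ^ 3 + c * z ^ 3))"
proof -
  define F where "F = (\<lambda>x y z. a * x ^ 3 + b * y ^ 3 + c * z ^ 3)"
  define P where "P = int p"
  have pr: "prime P" unfolding P_def using assms(1) by simp
  have P3: "P \<noteq> 3" unfolding P_def using assms(2) by simp
  have pe: "prime_elem P" using pr unfolding prime_def by blast
  have Pnu: "\<not> is_unit P" using pr by (simp add: prime_int_iff)
  have P0: "P \<noteq> 0" using pr by auto
  have au: "\<not> P dvd a" and bu: "\<not> P dvd b" and cu: "\<not> P dvd c"
    using assms(3) unfolding P_def by auto
  have a0: "a \<noteq> 0" using au by auto
  show ?thesis unfolding padic_dense_def F_def[symmetric]
  proof (intro allI)
    fix q :: rat and n :: int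
    show "\<exists>r\<in>ratio_set F. r = q \<or> n \<le> padic_val_rat p (r - q)"
    proof (cases "q = 0")
      case True
      have "F 1 0 0 \<noteq> 0" unfolding F_def using a0 by simp
      then have "of_int (F 0 0 0) / of_int (F 1 0 0) \<in> ratio_set F" by (rule mem_ratio)
      moreover have "of_int (F 0 0 0) / of_int (F 1 0 0) = q" using True unfolding F_def by simp
      ultimately show ?thesis by blast
    next
      case False
      obtain m' d' where q: "quotient_of q = (m', d')" by (cases "quotient_of q") auto
      have d'0: "d' > 0" using quotient_of_denom_pos[OF q] .
      have qe: "q = of_int m' / of_int d'" using quotient_of_div[OF q] .
      have m'0: "m' \<noteq> 0" using qe False by auto
      define \<alpha> where "\<alpha> = multiplicity P m'"
      define \<beta> where "\<beta> = multiplicity P d'"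
      obtain m where m: "m' = P^\<alpha> * m" "\<not> P dvd m"
        using multiplicity_decompose'[OF m'0 Pnu] unfolding \<alpha>_def by blast
      obtain d where d: "d' = P^\<beta> * d" "\<not> P dvd d"
        using multiplicity_decompose'[of d' P] d'0 Pnu unfolding \<beta>_def by auto
      define j where "j = (\<alpha> + 2*\<beta> + 2) mod 3 + 1"
      define t1 where "t1 = (\<alpha> + 2*\<beta> + 2) div 3"
      have j1: "j \<ge> 1" unfolding j_def by simp
      have tj: "3*t1 + j = \<alpha> + 2*\<beta> + 3" unfolding j_def t1_def by simp
      obtain d'' where d'': "P dvd d * d'' - 1" using inv_ex[OF pr d(2)] by blast
      define e where "e = m * a * d''"
      obtain x0 y0 z0 e1 where v: "F x0 y0 z0 = P^j * e1" "P dvd e1 - e"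
        using values_ex[OF pr P3 au bu cu j1, of e] unfolding F_def by blast
      have ed: "P dvd e1 * d - m * a"
        by (rule dvd_comb[OF v(2) d'', of _ d "m*a"]) (simp add: e_def algebra_simps)
      have e1u: "\<not> P dvd e1 * d"
      proof
        assume "P dvd e1 * d"
        then have "P dvd e1 * d - (e1 * d - m * a)" using ed by (rule dvd_diff)
        then have "P dvd m * a" by simp
        then show False using m(2) au pr prime_dvd_mult_int by blast
      qed
      define N where "N = nat (n - (int \<alpha> - int \<beta>))"
      have "P dvd (e1*d) * 1^3 + (- (m*a))" using ed by simp
      moreover have P1: "\<not> P dvd 1" using pr by (simp add: prime_int_iff)
      ultimately obtain s where
        s: "P^(Suc N) dvd (e1*d) * s^3 + (- (m*a))" using hensel[OF pr P3 e1u P1, of "- (m*a)" N] by blast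
      define D where "D = e1 * d * s^3 - m * a"
      have sD: "P^(Suc N) dvd D" using s unfolding D_def by simp
      define k where "k = s * P^t1"
      define FX where "FX = F (k*x0) (k*y0) (k*z0)"
      define FY where "FY = F (P^(\<beta>+1)) 0 0"
      have p1: "P^(\<alpha> + 2*\<beta> + 3) = P^\<alpha> * (P^\<beta>)^2 * P^3"
        by (simp add: power_add power_mult_distrib flip: power_mult) (simp add: ac_simps)
      have p2: "P^(3*\<beta> + 3) = (P^\<beta>)^3 * P^3"
        by (simp add: power_add power_mult_distrib flip: power_mult) (simp add: ac_simps)
      have p3: "P^(\<alpha> + 3*\<beta> + 3) = P^\<alpha> * (P^\<beta>)^3 * P^3"
        by (simp add: power_add power_mult_distrib flip: power_mult) (simp add: ac_simps)
      have p4: "P^(4*\<beta> + 3) = (P^\<beta>)^4 * P^3"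
        by (simp add: power_add power_mult_distrib flip: power_mult) (simp add: ac_simps)
      have p5: "P^(\<beta>+1) = P^\<beta> * P" by simp
      have FX: "FX = s^3 * P^(\<alpha> + 2*\<beta> + 3) * e1"
      proof -
        have "FX = k^3 * F x0 y0 z0" unfolding FX_def F_def by (simp add: algebra_simps power_mult_distrib)
        also have "\<dots> = s^3 * (P^t1)^3 * (P^j * e1)" unfolding k_def v(1)
          by (simp add: power_mult_distrib)
        also have "(P^t1)^3 = P^(3*t1)" by (simp add: power_mult[symmetric] mult.commute)
        also have "s^3 * P^(3*t1) * (P^j * e1) = s^3 * (P^(3*t1) * P^j) * e1" by (simp add: ac_simps)
        also have "P^(3*t1) * P^j = P^(\<alpha> + 2*\<beta> + 3)" by (simp add: power_add[symmetric] tj)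
        finally show ?thesis .
      qed
      have FY: "FY = a * P^(3*\<beta> + 3)" unfolding FY_def F_def p2 p5
        by (simp add: power_mult_distrib)
      have FY0: "FY \<noteq> 0" using FY a0 P0 by simp
      define r where "r = (of_int FX / of_int FY :: rat)"
      have rS: "r \<in> ratio_set F" unfolding r_def FX_def using FY0 unfolding FY_def by (rule mem_ratio)
      have num: "FX * d' - m' * FY = P^(\<alpha> + 3*\<beta> + 3) * D"
        unfolding FX FY m(1) d(1) D_def p1 p2 p3 by (simp add: algebra_simps power2_eq_square power3_eq_cube)
      have den: "FY * d' = P^(4*\<beta> + 3) * (a * d)"
        unfolding FY d(1) p2 p4 by (simp add: algebra_simps power2_eq_square power3_eq_cube power4_eq_xxxx)
      have rq: "r - q = of_int (FX * d' - m' * FY) / of_int (FY * d')"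
        unfolding r_def qe using FY0 d'0 by (simp add: field_simps)
      show ?thesis
      proof (cases "D = 0")
        case True
        then have "r = q" using rq num by simp
        then show ?thesis using rS by blast
      next
        case D0: False
        have ad: "\<not> P dvd a * d" using au d(2) pr prime_dvd_mult_int by blast
        have mD: "Suc N \<le> multiplicity P D" using multiplicity_geI[OF D0 Pnu sD] .
        have "padic_val_rat p (r - q) =
              int (multiplicity P (P^(\<alpha> + 3*\<beta> + 3) * D)) - int (multiplicity P (P^(4*\<beta> + 3) * (a * d)))"
          unfolding rq num den P_def[symmetric] using pval[OF assms(1)] P_def P0 D0 a0 d(2) ad
          by (metis (no_types) assms(1) dvd_0_right mult_eq_0_iff power_not_zero)
        also have "\<dots> = int (\<alpha> + 3*\<beta> + 3 + multiplicity P D) - int (4*\<beta> + 3)"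
          using prime_elem_multiplicity_mult_distrib[OF pe] multiplicity_prime_power[OF pe]
            not_dvd_imp_multiplicity_0[OF ad] P0 D0 ad
          by (metis (no_types) add_0_right dvd_0_right mult_eq_0_iff power_not_zero)
        finally have "padic_val_rat p (r - q) = int \<alpha> - int \<beta> + int (multiplicity P D)" by simp
        moreover have "n \<le> int \<alpha> - int \<beta> + int (Suc N)" unfolding N_def by simp
        ultimately have "n \<le> padic_val_rat p (r - q)" using mD by linarith
        then show ?thesis using rS by blast
      qed
    qed
  qed
qed


end
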